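(* Consider the discrete-time system $x_{k+1}=(I-\varepsilon\Delta)x_k+\varepsilon\pi A\psi(x_k)$, with $\varepsilon>0$, $\pi>0$, and each $\psi_i$ satisfying (A1)–(A4). If $x^*\neq0$ is an equilibrium point of this system, then $\pi>\pi_1=\frac{1}{1-\lambda_1(\mathcal L)}$.
   Context: Let $\mathcal G$ be an undirected, connected signed graph on $n$ nodes without self-loops, with symmetric adjacency matrix $A=[a_{ij}]$ having zero diagonal and entries of either sign. Let $\delta_i=\sum_j|a_{ij}|>0$, $\Delta=\mathrm{diag}(\delta_i)$, and $\mathcal L=I-\Delta^{-1}A$, with real eigenvalues $\lambda_1(\mathcal L)\le\dots\le\lambda_n(\mathcal L)$. Each $\psi_i:\mathbb R\to\mathbb R$ is smooth and satisfies: (A1) $\psi_i$ is odd; (A2) $\psi_i'>0$ everywhere and $\psi_i'(0)=1$; (A3) $\lim_{s\to\pm\infty}\psi_i(s)=\pm1$; (A4) $\psi_i$ is strictly convex for $s<0$ and strictly concave for $s>0$. Here $\psi(x)=(\psi_1(x_1),\dots,\psi_n(x_n))^T$. *)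

theory Defs
  imports "HOL-Analysis.Analysis"
begin

definition strictly_convex_on :: "real set \<Rightarrow> (real \<Rightarrow> real) \<Rightarrow> bool" where
  "strictly_convex_on S f \<longleftrightarrow>
     (\<forall>x\<in>S. \<forall>y\<in>S. \<forall>t. x \<noteq> y \<and> 0 < t \<and> t < 1 \<longrightarrow>
        f ((1 - t) * x + t * y) < (1 - t) * f x + t * f y)"

definition strictly_concave_on :: "real set \<Rightarrow> (real \<Rightarrow> real) \<Rightarrow> bool" where
  "strictly_concave_on S f \<longleftrightarrow> strictly_convex_on S (\<lambda>x. - f x)"

definition smooth_fun :: "(real \<Rightarrow> real) \<Rightarrow> bool" where
  "smooth_fun f \<longleftrightarrow> (\<forall>k. \<forall>x. ((deriv ^^ k) f) differentiable (at x))"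

definition is_eigenvalue :: "real^'n^'n \<Rightarrow> real \<Rightarrow> bool" where
  "is_eigenvalue M \<mu> \<longleftrightarrow> (\<exists>v. v \<noteq> 0 \<and> M *v v = \<mu> *\<^sub>R v)"

definition lambda_min :: "real^'n^'n \<Rightarrow> real" where
  "lambda_min M = Min {\<mu>. is_eigenvalue M \<mu>}"

definition degree_mat :: "real^'n^'n \<Rightarrow> real^'n^'n" where
  "degree_mat A = (\<chi> i j. if i = j then (\<Sum>k\<in>UNIV. \<bar>A $ i $ k\<bar>) else 0)"

definition norm_laplacian :: "real^'n^'n \<Rightarrow> real^'n^'n" where
  "norm_laplacian A = (\<chi> i j. (if i = j then 1 else 0) - A $ i $ j / (\<Sum>k\<in>UNIV. \<bar>A $ i $ k\<bar>))"

definition graph_connected :: "real^'n^'n \<Rightarrow> bool" where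
  "graph_connected A \<longleftrightarrow> (\<forall>i j. (i, j) \<in> {(p, q). A $ p $ q \<noteq> 0}\<^sup>*)"

end

theory Submission
  imports Defs
begin


lemma psi_pos_lt:
  fixes f :: "real \<Rightarrow> real"
  assumes diff: "\<And>x. f differentiable (at x)"
    and d0: "deriv f 0 = 1" and f0: "f 0 = 0"
    and conc: "strictly_concave_on {0<..} f"
    and s: "s > 0"
  shows "f s < s"
proof -
  have der: "\<And>x. DERIV f x :> deriv f x" using diff DERIV_deriv_iff_real_differentiable by blast
  have cont: "isCont f x" for x using der DERIV_isCont by blast
  have cc: "\<And>x y t. 0 < x \<Longrightarrow> 0 < y \<Longrightarrow> x \<noteq> y \<Longrightarrow> 0 < t \<Longrightarrow> t < 1 \<Longrightarrow>
       f ((1 - t) * x + t * y) > (1 - t) * f x + t * f y"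
    using conc unfolding strictly_concave_on_def strictly_convex_on_def by fastforce
  have weak: "f t \<ge> (t / u) * f u" if t: "0 < t" "t < u" for t u
  proof -
    define h where "h a = ((u - t) / (u - a)) * f a + ((t - a) / (u - a)) * f u" for a
    have lim: "(h \<longlongrightarrow> h 0) (at_right 0)"
    proof -
      have "isCont h 0" unfolding h_def using t cont[of 0]
        by (intro continuous_intros) auto
      thus ?thesis by (simp add: isCont_def filterlim_at_split)
    qed
    have ev: "eventually (\<lambda>a. h a \<le> f t) (at_right 0)"
    proof (rule eventually_at_rightI[of 0 t])
      fix a assume a: "a \<in> {0<..<t}"
      define l where "l = (t - a) / (u - a)"
      have l: "0 < l" "l < 1" using a t by (auto simp: l_def field_simps)
      have ne: "u - a \<noteq> 0" using a t by auto
      have tt: "(1 - l) * a + l * u = t" unfolding l_def using ne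
        by (simp add: divide_simps) (simp add: algebra_simps)
      have "1 - l = (u - t) / (u - a)" using a t by (simp add: l_def field_simps)
      hence "h a = (1 - l) * f a + l * f u" by (simp add: h_def l_def)
      also have "\<dots> < f t" using cc[of a u l] a t l tt by auto
      finally show "h a \<le> f t" by simp
    qed (use t in auto)
    have "h 0 \<le> f t" using tendsto_le[OF _ tendsto_const lim ev] by simp
    thus ?thesis using t f0 by (simp add: h_def)
  qed
  have le1: "f u \<le> u" if u: "u > 0" for u
  proof -
    have "((\<lambda>h. (f (0 + h) - f 0) / h) \<longlongrightarrow> 1) (at 0)"
      using der[of 0] d0 DERIV_def by metis
    hence lim: "((\<lambda>h. f h / h) \<longlongrightarrow> 1) (at_right 0)"
      using f0 by (simp add: filterlim_at_split)
    have ev: "eventually (\<lambda>t. f u / u \<le> f t / t) (at_right 0)"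
    proof (rule eventually_at_rightI[of 0 u])
      fix t assume t: "t \<in> {0<..<u}"
      have "(t / u) * f u \<le> f t" using weak[of t u] t by auto
      thus "f u / u \<le> f t / t" using t by (simp add: field_simps)
    qed (use u in auto)
    have "f u / u \<le> 1" using tendsto_le[OF _ lim tendsto_const ev] by simp
    thus ?thesis using u by (simp add: field_simps)
  qed
  have a: "f (s/4) \<ge> (1/4) * f s" using weak[of "s/4" s] s by auto
  have b: "f ((1 - 1/3) * (s/4) + (1/3) * s) > (1 - 1/3) * f (s/4) + (1/3) * f s"
    using cc[of "s/4" s "1/3"] s by auto
  have "(1 - 1/3) * (s/4) + (1/3) * s = s/2" by simp
  with b have "f (s/2) > (2/3) * f (s/4) + (1/3) * f s" by simp
  moreover have "f (s/2) \<le> s/2" using le1[of "s/2"] s by simp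
  ultimately show ?thesis using a by linarith
qed



lemma sym_inner:
  fixes M :: "real^'n^'n"
  assumes "\<And>i j. M $ i $ j = M $ j $ i"
  shows "x \<bullet> (M *v y) = y \<bullet> (M *v x)"
proof -
  have "x \<bullet> (M *v y) = (\<Sum>i\<in>UNIV. \<Sum>j\<in>UNIV. x $ i * M $ i $ j * y $ j)"
    by (simp add: inner_vec_def matrix_vector_mult_def sum_distrib_left mult.assoc)
  also have "\<dots> = (\<Sum>j\<in>UNIV. \<Sum>i\<in>UNIV. x $ i * M $ i $ j * y $ j)" by (rule sum.swap)
  also have "\<dots> = y \<bullet> (M *v x)"
    by (simp add: inner_vec_def matrix_vector_mult_def sum_distrib_left assms mult.commute mult.left_commute)
  finally show ?thesis .
qed

lemma scaleR_mat_vec: "((c::real) *\<^sub>R (M::real^'n^'m)) *v x = c *\<^sub>R (M *v x)"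
  by (simp add: vec_eq_iff matrix_vector_mult_def sum_distrib_left mult.assoc)

lemma degree_mat_vec: "(degree_mat A *v v) $ i = (\<Sum>k\<in>UNIV. \<bar>A $ i $ k\<bar>) * v $ i"
proof -
  have "(\<Sum>j\<in>UNIV. (if i = j then (\<Sum>k\<in>UNIV. \<bar>A $ i $ k\<bar>) else 0) * v $ j)
      = (\<Sum>j\<in>UNIV. if i = j then (\<Sum>k\<in>UNIV. \<bar>A $ i $ k\<bar>) * v $ j else 0)"
    by (rule sum.cong) auto
  thus ?thesis by (simp add: degree_mat_def matrix_vector_mult_def)
qed

lemma degree_mat_sym: "degree_mat A $ i $ j = degree_mat A $ j $ i"
  by (simp add: degree_mat_def)

lemma lap_vec: "(norm_laplacian A *v v) $ i = v $ i - (A *v v) $ i / (\<Sum>k\<in>UNIV. \<bar>A $ i $ k\<bar>)"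
proof -
  have "(\<Sum>j\<in>UNIV. ((if i = j then 1 else 0) - A $ i $ j / (\<Sum>k\<in>UNIV. \<bar>A $ i $ k\<bar>)) * v $ j)
      = (\<Sum>j\<in>UNIV. (if i = j then v $ j else 0) - A $ i $ j * v $ j / (\<Sum>k\<in>UNIV. \<bar>A $ i $ k\<bar>))"
    by (rule sum.cong) (auto simp: left_diff_distrib)
  thus ?thesis by (simp add: norm_laplacian_def matrix_vector_mult_def sum_subtractf sum_divide_distrib)
qed

lemma lap_eig:
  assumes "\<And>i. (\<Sum>j\<in>UNIV. \<bar>A $ i $ j\<bar>) > 0"
  shows "norm_laplacian A *v v = \<mu> *\<^sub>R v \<longleftrightarrow> A *v v = (1 - \<mu>) *\<^sub>R (degree_mat A *v v)"
proof -
  have "(norm_laplacian A *v v) $ i = (\<mu> *\<^sub>R v) $ i \<longleftrightarrow> (A *v v) $ i = ((1 - \<mu>) *\<^sub>R (degree_mat A *v v)) $ i" for i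
    using assms[of i] by (simp add: lap_vec degree_mat_vec field_simps) (auto simp: algebra_simps)
  thus ?thesis by (simp add: vec_eq_iff)
qed

lemma deg_form_pos:
  assumes "\<And>i. (\<Sum>j\<in>UNIV. \<bar>A $ i $ j\<bar>) > 0" "y \<noteq> 0"
  shows "y \<bullet> (degree_mat A *v y) > 0"
proof -
  obtain i where i: "y $ i \<noteq> 0" using assms(2) by (auto simp: vec_eq_iff)
  have "y \<bullet> (degree_mat A *v y) = (\<Sum>i\<in>UNIV. (\<Sum>k\<in>UNIV. \<bar>A $ i $ k\<bar>) * (y $ i)^2)"
    by (simp add: inner_vec_def degree_mat_vec power2_eq_square mult.commute mult.left_commute mult.assoc)
  also have "\<dots> > 0"
    by (rule sum_pos2[where i=i]) (use assms(1) i in auto)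
  finally show ?thesis .
qed


lemma psi_sq:
  fixes f :: "real \<Rightarrow> real"
  assumes sm: "smooth_fun f"
    and odd: "\<And>s. f (- s) = - f s"
    and dpos: "\<And>s. deriv f s > 0" and d0: "deriv f 0 = 1"
    and conc: "strictly_concave_on {0<..} f"
  shows "f 0 = 0" and "s \<noteq> 0 \<Longrightarrow> (f s)^2 < s * f s"
proof -
  have diff: "\<And>x. f differentiable (at x)" using sm unfolding smooth_fun_def
    by (metis funpow_0)
  show f0: "f 0 = 0" using odd[of 0] by simp
  have der: "\<And>x. DERIV f x :> deriv f x" using diff DERIV_deriv_iff_real_differentiable by blast
  have pos: "0 < f s \<and> f s < s" if "s > 0" for s
  proof
    show "0 < f s" using DERIV_pos_imp_increasing[of 0 s f] that der dpos f0 by metis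
    show "f s < s" by (rule psi_pos_lt[OF diff d0 f0 conc that])
  qed
  assume s: "s \<noteq> 0"
  show "(f s)^2 < s * f s"
  proof (cases "s > 0")
    case True
    with pos[OF True] show ?thesis by (simp add: power2_eq_square)
  next
    case False
    with s have "-s > 0" by simp
    from pos[OF this] odd[of s] show ?thesis by (simp add: power2_eq_square)
  qed
qed


theorem lemma3:
  fixes A :: "real^'n^'n"
    and \<psi> :: "'n \<Rightarrow> real \<Rightarrow> real"
    and \<epsilon> \<pi> :: real
    and xs :: "real^'n"
  assumes sym: "\<And>i j. A $ i $ j = A $ j $ i"
    and diag0: "\<And>i. A $ i $ i = 0"
    and conn: "graph_connected A"
    and deg_pos: "\<And>i. (\<Sum>j\<in>UNIV. \<bar>A $ i $ j\<bar>) > 0"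
    and smooth: "\<And>i. smooth_fun (\<psi> i)"
    and A1: "\<And>i s. \<psi> i (- s) = - \<psi> i s"
    and A2: "\<And>i s. deriv (\<psi> i) s > 0" "\<And>i. deriv (\<psi> i) 0 = 1"
    and A3: "\<And>i. (\<psi> i \<longlongrightarrow> 1) at_top" "\<And>i. (\<psi> i \<longlongrightarrow> -1) at_bot"
    and A4: "\<And>i. strictly_convex_on {..<0} (\<psi> i)" "\<And>i. strictly_concave_on {0<..} (\<psi> i)"
    and eps: "\<epsilon> > 0"
    and pi: "\<pi> > 0"
    and equil: "xs = (mat 1 - \<epsilon> *\<^sub>R degree_mat A) *v xs + (\<epsilon> * \<pi>) *\<^sub>R (A *v (\<chi> i. \<psi> i (xs $ i)))"
    and nz: "xs \<noteq> 0"
  shows "\<pi> > 1 / (1 - lambda_min (norm_laplacian A))"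
proof -
  define D where "D = degree_mat A"
  define L where "L = norm_laplacian A"
  define S where "S = {\<mu>. is_eigenvalue L \<mu>}"
  have Dsym: "\<And>x y. x \<bullet> (D *v y) = y \<bullet> (D *v x)"
    unfolding D_def by (rule sym_inner) (rule degree_mat_sym)
  have Asym: "\<And>x y. x \<bullet> (A *v y) = y \<bullet> (A *v x)"
    by (rule sym_inner) (rule sym)
  have Dpos: "\<And>y. y \<noteq> 0 \<Longrightarrow> y \<bullet> (D *v y) > 0"
    unfolding D_def using deg_pos by (rule deg_form_pos)
  have eig: "\<And>v \<mu>. L *v v = \<mu> *\<^sub>R v \<longleftrightarrow> A *v v = (1 - \<mu>) *\<^sub>R (D *v v)"
    unfolding L_def D_def using deg_pos by (rule lap_eig)
  have orth: "v \<bullet> (D *v w) = 0" if "L *v v = \<mu> *\<^sub>R v" "L *v w = \<nu> *\<^sub>R w" "\<mu> \<noteq> \<nu>" for v w \<mu> \<nu>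
  proof -
    have 1: "v \<bullet> (A *v w) = (1 - \<nu>) * (v \<bullet> (D *v w))" using that(2) eig by simp
    have 2: "w \<bullet> (A *v v) = (1 - \<mu>) * (w \<bullet> (D *v v))" using that(1) eig by simp
    have "(1 - \<nu>) * (v \<bullet> (D *v w)) = (1 - \<mu>) * (v \<bullet> (D *v w))"
      using 1 2 Asym[of v w] Dsym[of v w] by auto
    hence "(\<mu> - \<nu>) * (v \<bullet> (D *v w)) = 0" by (simp add: algebra_simps)
    thus ?thesis using that(3) by simp
  qed
  have finS: "finite S"
  proof (rule ccontr)
    assume "infinite S"
    then obtain T where T: "T \<subseteq> S" "finite T" "card T = Suc CARD('n)"
      using infinite_arbitrarily_large by blast
    define e where "e \<mu> = (SOME v. v \<noteq> 0 \<and> L *v v = \<mu> *\<^sub>R v)" for \<mu>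
    have e: "e \<mu> \<noteq> 0 \<and> L *v e \<mu> = \<mu> *\<^sub>R e \<mu>" if "\<mu> \<in> T" for \<mu>
    proof -
      have "\<exists>v. v \<noteq> 0 \<and> L *v v = \<mu> *\<^sub>R v" using that T(1) by (auto simp: S_def is_eigenvalue_def)
      thus ?thesis unfolding e_def by (rule someI_ex)
    qed
    have inj: "inj_on e T"
    proof (rule inj_onI)
      fix \<mu> \<nu> assume a: "\<mu> \<in> T" "\<nu> \<in> T" "e \<mu> = e \<nu>"
      hence "\<mu> *\<^sub>R e \<mu> = \<nu> *\<^sub>R e \<mu>" using e by metis
      hence "(\<mu> - \<nu>) *\<^sub>R e \<mu> = 0" by (simp add: algebra_simps)
      thus "\<mu> = \<nu>" using e[OF a(1)] by simp
    qed
    have ind: "independent (e ` T)"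
    proof
      assume "dependent (e ` T)"
      then obtain u w where uw: "w \<in> e ` T" "u w \<noteq> 0" "(\<Sum>v\<in>e ` T. u v *\<^sub>R v) = 0"
        using dependent_finite[of "e ` T"] T(2) by auto
      obtain \<nu> where \<nu>: "\<nu> \<in> T" "w = e \<nu>" using uw(1) by auto
      have "0 = (\<Sum>v\<in>e ` T. u v *\<^sub>R v) \<bullet> (D *v w)" using uw(3) by simp
      also have "\<dots> = (\<Sum>v\<in>e ` T. u v * (v \<bullet> (D *v w)))"
        by (simp add: inner_sum_left)
      also have "\<dots> = u w * (w \<bullet> (D *v w)) + (\<Sum>v\<in>e ` T - {w}. u v * (v \<bullet> (D *v w)))"
        using sum.remove[OF finite_imageI[OF T(2)] uw(1)] by simp
      also have "(\<Sum>v\<in>e ` T - {w}. u v * (v \<bullet> (D *v w))) = 0"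
      proof (rule sum.neutral, rule ballI)
          fix v assume "v \<in> e ` T - {w}"
          then obtain \<mu> where \<mu>: "\<mu> \<in> T" "v = e \<mu>" "e \<mu> \<noteq> e \<nu>" using \<nu> by auto
          hence "\<mu> \<noteq> \<nu>" by auto
          thus "u v * (v \<bullet> (D *v w)) = 0" using orth[of "e \<mu>" \<mu> "e \<nu>" \<nu>] e \<mu> \<nu> by simp
      qed
      finally have "u w * (w \<bullet> (D *v w)) = 0" by simp
      moreover have "w \<bullet> (D *v w) > 0" using Dpos e \<nu> by simp
      ultimately show False using uw(2) by simp
    qed
    have "card (e ` T) \<le> DIM(real^'n)" using independent_bound[OF ind] by simp
    moreover have "card (e ` T) = card T" using card_image[OF inj] .
    ultimately show False using T(3) by simp
  qed

  define f where "f y = (y \<bullet> (A *v y)) / (y \<bullet> (D *v y))" for y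
  have contf: "continuous_on (sphere 0 1) f" unfolding f_def
    proof (intro continuous_intros ballI)
    fix y :: "real^'n" assume "y \<in> sphere 0 1"
    hence "y \<noteq> 0" by auto
    thus "y \<bullet> (D *v y) \<noteq> 0" using Dpos by fastforce
  qed
  obtain y0 where y0: "y0 \<in> sphere 0 1" "\<forall>y\<in>sphere 0 1. f y \<le> f y0"
    using continuous_attains_sup[OF compact_sphere _ contf] by auto
  define R where "R = f y0"
  have y0nz: "y0 \<noteq> 0" using y0(1) by auto
  have bound: "y \<bullet> (A *v y) \<le> R * (y \<bullet> (D *v y))" for y
  proof (cases "y = 0")
    case True thus ?thesis by simp
  next
    case False
    define z where "z = (1 / norm y) *\<^sub>R y"
    have "z \<in> sphere 0 1" using False by (simp add: z_def)
    hence "f z \<le> R" using y0 R_def by auto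
    moreover have "f z = f y" using False
      by (simp add: f_def z_def matrix_vector_mult_scaleR)
    ultimately have "f y \<le> R" by simp
    thus ?thesis using Dpos[OF False] by (simp add: f_def divide_le_eq)
  qed
  define G where "G y = R *\<^sub>R (D *v y) - A *v y" for y
  have Q: "y \<bullet> G y \<ge> 0" for y using bound[of y] by (simp add: G_def inner_diff_right)
  have Q0: "y0 \<bullet> G y0 = 0"
    using Dpos[OF y0nz] by (simp add: G_def inner_diff_right R_def f_def)
  have Glin: "G (a + t *\<^sub>R b) = G a + t *\<^sub>R G b" for a b t
    by (simp add: G_def algebra_simps matrix_vector_mult_scaleR)
  have Gsym: "a \<bullet> G b = b \<bullet> G a" for a b
    using Dsym[of a b] Asym[of a b] by (simp add: G_def inner_diff_right)
  define g where "g = G y0"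
  have expd: "(y0 + t *\<^sub>R g) \<bullet> G (y0 + t *\<^sub>R g) = 2*t*(g \<bullet> g) + t^2*(g \<bullet> G g)" for t
    using Q0 Gsym[of y0 g] unfolding Glin
    by (simp add: inner_add_left inner_add_right g_def algebra_simps power2_eq_square)
  have g0: "g = 0"
  proof (rule ccontr)
    assume "g \<noteq> 0"
    define a where "a = g \<bullet> g"
    define b where "b = g \<bullet> G g"
    have a: "a > 0" using \<open>g \<noteq> 0\<close> by (simp add: a_def)
    have b: "b \<ge> 0" using Q by (simp add: b_def)
    define t where "t = - a / (b + 1)"
    have t: "t < 0" using a b by (simp add: t_def)
    have "b / (b + 1) < 1" using b by simp
    hence "b * (a / (b+1)) < a" using a b by (simp add: field_simps)
    hence "2 * a + t * b > 0" using a by (simp add: t_def field_simps)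
    hence "t * (2 * a + t * b) < 0" using t by (simp add: mult_neg_pos)
    moreover have "0 \<le> 2*t*a + t^2*b" using Q[of "y0 + t *\<^sub>R g"] expd[of t] by (simp add: a_def b_def)
    ultimately show False by (simp add: algebra_simps power2_eq_square)
  qed
  have "A *v y0 = R *\<^sub>R (D *v y0)" using g0 by (simp add: g_def G_def)
  hence "L *v y0 = (1 - R) *\<^sub>R y0" using eig by simp
  hence RS: "1 - R \<in> S" using y0nz by (auto simp: S_def is_eigenvalue_def)
  define p where "p = (\<chi> i. \<psi> i (xs $ i))"
  have "xs = xs - \<epsilon> *\<^sub>R (D *v xs) + (\<epsilon> * \<pi>) *\<^sub>R (A *v p)"
    using equil by (simp add: matrix_vector_mult_diff_rdistrib scaleR_mat_vec D_def p_def)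
  hence "\<epsilon> *\<^sub>R (D *v xs) = \<epsilon> *\<^sub>R (\<pi> *\<^sub>R (A *v p))" by (simp add: algebra_simps)
  hence Dx: "D *v xs = \<pi> *\<^sub>R (A *v p)" using eps by (metis scaleR_cancel_left less_irrefl)
  have hp: "p \<bullet> (D *v xs) = \<pi> * (p \<bullet> (A *v p))" using Dx by simp
  have ps0: "\<psi> i 0 = 0" for i using psi_sq(1)[OF smooth A1 A2(1) A2(2) A4(2)] .
  have psq: "s \<noteq> 0 \<Longrightarrow> (\<psi> i s)^2 < s * \<psi> i s" for i s
    using psi_sq(2)[OF smooth A1 A2(1) A2(2) A4(2)] .
  obtain i0 where i0: "xs $ i0 \<noteq> 0" using nz by (auto simp: vec_eq_iff)
  have pnz: "p \<noteq> 0"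
  proof
    assume "p = 0"
    hence "\<psi> i0 (xs $ i0) = 0" by (simp add: p_def vec_eq_iff)
    thus False using psq[OF i0, of i0] by simp
  qed
  have "p \<bullet> (D *v p) < p \<bullet> (D *v xs)"
  proof -
    have "p \<bullet> (D *v p) = (\<Sum>i\<in>UNIV. (\<Sum>k\<in>UNIV. \<bar>A $ i $ k\<bar>) * (\<psi> i (xs $ i))^2)"
      by (simp add: D_def p_def inner_vec_def degree_mat_vec power2_eq_square mult.commute mult.left_commute)
    also have "\<dots> < (\<Sum>i\<in>UNIV. (\<Sum>k\<in>UNIV. \<bar>A $ i $ k\<bar>) * (xs $ i * \<psi> i (xs $ i)))"
    proof (rule sum_strict_mono_ex1)
      show "\<forall>i\<in>UNIV. (\<Sum>k\<in>UNIV. \<bar>A $ i $ k\<bar>) * (\<psi> i (xs $ i))^2 \<le> (\<Sum>k\<in>UNIV. \<bar>A $ i $ k\<bar>) * (xs $ i * \<psi> i (xs $ i))"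
      proof
        fix i :: 'n
        have "(\<psi> i (xs $ i))^2 \<le> xs $ i * \<psi> i (xs $ i)"
          using psq[of "xs $ i" i] ps0[of i] by (cases "xs $ i = 0") auto
        thus "(\<Sum>k\<in>UNIV. \<bar>A $ i $ k\<bar>) * (\<psi> i (xs $ i))^2 \<le> (\<Sum>k\<in>UNIV. \<bar>A $ i $ k\<bar>) * (xs $ i * \<psi> i (xs $ i))"
          using deg_pos[of i] by (simp add: mult_left_mono)
      qed
      show "\<exists>i\<in>UNIV. (\<Sum>k\<in>UNIV. \<bar>A $ i $ k\<bar>) * (\<psi> i (xs $ i))^2 < (\<Sum>k\<in>UNIV. \<bar>A $ i $ k\<bar>) * (xs $ i * \<psi> i (xs $ i))"
        using psq[OF i0, of i0] deg_pos[of i0] by (intro bexI[of _ i0]) (auto simp: mult_strict_left_mono)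
    qed simp
    also have "\<dots> = p \<bullet> (D *v xs)"
      by (simp add: D_def p_def inner_vec_def degree_mat_vec mult.commute mult.left_commute mult.assoc)
    finally show ?thesis .
  qed
  also have "\<dots> \<le> \<pi> * (R * (p \<bullet> (D *v p)))" using hp bound[of p] pi by (simp add: mult_left_mono)
  finally have "1 * (p \<bullet> (D *v p)) < (\<pi> * R) * (p \<bullet> (D *v p))" by (simp add: mult.assoc)
  hence piR: "1 < \<pi> * R" using Dpos[OF pnz] by (simp add: mult_less_cancel_right)
  have Rpos: "R > 0" using piR pi by (metis mult_pos_neg mult_zero_right not_less_iff_gr_or_eq less_trans zero_less_one)
  have m: "lambda_min L \<le> 1 - R" unfolding lambda_min_def S_def[symmetric] using finS RS by simp
  have "1 / (1 - lambda_min L) \<le> 1 / R" using m Rpos by (simp add: frac_le)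
  also have "1 / R < \<pi>" using piR Rpos by (simp add: field_simps)
  finally show ?thesis by (simp add: L_def)
qed

end
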